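(* Let $X$, $Y$ be Banach spaces with $Y$ continuously embedded in $X$, and let $G$ generate a $C_0$-semigroup $(S(t))_{t\ge0}$ on $X$ such that $S(t)Y\subseteq Y$ for every $t\ge0$. (i) For every $t\ge0$, $S(t)|_Y\in\mathcal B(Y)$. (ii) If $t\mapsto S(t)y$ is continuous from $[0,\infty)$ to $Y$ for every $y\in Y$, then $\{\|S(t)|_Y\|_{\mathcal B(Y)}:t\in[0,t_1]\}$ is bounded for every $t_1\in(0,\infty)$. (iii) Assume that $\{\|S(t)|_Y\|_{\mathcal B(Y)}:t\in[0,t_1]\}$ is bounded for every $t_1\in(0,\infty)$, and that there is $\eta:(0,\infty)\to(0,\infty)$ with $\eta(\delta)\to0$ as $\delta\to0^+$ such that for all $0\le s_0<s_1$ and $\varphi\in C([s_0,s_1],X)$, $\int_{s_0}^{s_1}S(s_1-s)\varphi(s)\,ds\in Y$ and $\|\int_{s_0}^{s_1}S(s_1-s)\varphi(s)\,ds\|_Y\le\eta(s_1-s_0)\|\varphi\|_{C([s_0,s_1],X)}$. Then for all $0\le s_0<s_1$ and every $\varphi\in C([s_0,s_1],X)$, the function $t\mapsto\int_{s_0}^tS(t-s)\varphi(s)\,ds$ is continuous from $[s_0,s_1]$ to $Y$. *)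

theory Defs
  imports "HOL-Analysis.Analysis"
begin

text \<open>A \<open>C\<^sub>0\<close>-semigroup of bounded linear operators on a Banach space,
  indexed by \<open>t \<ge> 0\<close> (values for negative \<open>t\<close> are irrelevant).\<close>
definition C0_semigroup :: "(real \<Rightarrow> 'x::banach \<Rightarrow> 'x) \<Rightarrow> bool" where
  "C0_semigroup S \<longleftrightarrow>
     (\<forall>t\<ge>0. bounded_linear (S t)) \<and>
     S 0 = id \<and>
     (\<forall>t\<ge>0. \<forall>s\<ge>0. S (t + s) = S t \<circ> S s) \<and>
     (\<forall>x. ((\<lambda>t. S t x) \<longlongrightarrow> x) (at_right 0))"

definition is_generator ::
    "(real \<Rightarrow> 'x::banach \<Rightarrow> 'x) \<Rightarrow> 'x set \<Rightarrow> ('x \<Rightarrow> 'x) \<Rightarrow> bool" where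
  "is_generator S D G \<longleftrightarrow>
     D = {x. \<exists>l. ((\<lambda>h. (1 / h) *\<^sub>R (S h x - x)) \<longlongrightarrow> l) (at_right 0)} \<and>
     (\<forall>x\<in>D. ((\<lambda>h. (1 / h) *\<^sub>R (S h x - x)) \<longlongrightarrow> G x) (at_right 0))"

definition generates_C0 ::
    "'x set \<Rightarrow> ('x::banach \<Rightarrow> 'x) \<Rightarrow> (real \<Rightarrow> 'x \<Rightarrow> 'x) \<Rightarrow> bool" where
  "generates_C0 D G S \<longleftrightarrow> C0_semigroup S \<and> is_generator S D G"

end

theory Submission
  imports Defs
begin

lemma baire_banach:
  fixes A :: "nat \<Rightarrow> 'a::banach set"
  assumes cl: "\<And>n. closed (A n)" and un: "\<Union>(range A) = UNIV"
  shows "\<exists>n x r. r > 0 \<and> ball x r \<subseteq> A n"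
proof (rule ccontr)
  assume H: "\<not> ?thesis"
  have "euclidean interior_of \<Union>(range A) = {}"
  proof (rule Baire_category_alt)
    show "completely_metrizable_space (euclidean::'a topology) \<or> locally_compact_space (euclidean::'a topology) \<and> regular_space (euclidean::'a topology)"
      using completely_metrizable_space_euclidean by blast
    show "countable (range A)" by simp
    fix T assume "T \<in> range A"
    then obtain n where T: "T = A n" by blast
    show "closedin euclidean T \<and> euclidean interior_of T = {}"
    proof
      show "closedin euclidean T" using cl T by simp
      show "euclidean interior_of T = {}"
      proof (rule ccontr)
        assume "euclidean interior_of T \<noteq> {}"
        then obtain x where x: "x \<in> interior T" by auto
        then obtain r where "r > 0" "ball x r \<subseteq> T"
          using open_contains_ball_eq open_interior interior_subset by (metis subset_trans)
        then show False using H T by blast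
      qed
    qed
  qed
  then show False using un by simp
qed

lemma ubp:
  fixes F :: "'i \<Rightarrow> 'a::banach \<Rightarrow> 'b::real_normed_vector"
  assumes bl: "\<And>i. i \<in> I \<Longrightarrow> bounded_linear (F i)"
    and pb: "\<And>x. \<exists>B. \<forall>i\<in>I. norm (F i x) \<le> B"
  shows "\<exists>M. \<forall>i\<in>I. onorm (F i) \<le> M"
proof -
  define A where "A n = {x. \<forall>i\<in>I. norm (F i x) \<le> real n}" for n
  have "closed (A n)" for n
  proof -
    have "A n = (\<Inter>i\<in>I. {x. norm (F i x) \<le> real n})" unfolding A_def by auto
    moreover have "closed {x. norm (F i x) \<le> real n}" if "i \<in> I" for i
      using bl[OF that] by (intro closed_Collect_le continuous_intros) (simp_all add: linear_continuous_on)
    ultimately show ?thesis by auto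
  qed
  moreover have "\<Union>(range A) = UNIV"
  proof -
    have "x \<in> \<Union>(range A)" for x
    proof -
      obtain B where B: "\<forall>i\<in>I. norm (F i x) \<le> B" using pb by blast
      obtain n where "B \<le> real n" using real_arch_simple by blast
      then have "x \<in> A n" using B unfolding A_def by force
      then show ?thesis by blast
    qed
    then show ?thesis by blast
  qed
  ultimately obtain n x0 r where r: "r > 0" and sub: "ball x0 r \<subseteq> A n"
    using baire_banach by meson
  have "onorm (F i) \<le> 4 * real n / r" if i: "i \<in> I" for i
  proof (rule onorm_bound)
    show "0 \<le> 4 * real n / r" using r by simp
    interpret L: bounded_linear "F i" using bl[OF i] .
    fix x
    show "norm (F i x) \<le> 4 * real n / r * norm x"
    proof (cases "x = 0")
      case True then show ?thesis by (simp add: L.zero)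
    next
      case False
      define c where "c = r / (2 * norm x)"
      have c: "c > 0" using False r by (simp add: c_def)
      have "x0 \<in> A n" using sub r by auto
      moreover have "x0 + c *\<^sub>R x \<in> A n"
      proof -
        have "norm (c *\<^sub>R x) = r / 2" using False r by (simp add: c_def)
        then have "x0 + c *\<^sub>R x \<in> ball x0 r" using r by (simp add: dist_norm)
        then show ?thesis using sub by blast
      qed
      ultimately have "norm (F i x0) \<le> n" "norm (F i (x0 + c *\<^sub>R x)) \<le> n"
        using i unfolding A_def by auto
      then have "norm (F i (c *\<^sub>R x)) \<le> 2 * n"
        using norm_triangle_ineq4[of "F i (x0 + c *\<^sub>R x)" "F i x0"] by (simp add: L.add)
      then have "c * norm (F i x) \<le> 2 * n" using c by (simp add: L.scale)
      then have "norm (F i x) \<le> 2 * n / c" using c by (simp add: field_simps)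
      also have "2 * n / c = 4 * real n / r * norm x" using False r by (simp add: c_def field_simps)
      finally show ?thesis .
    qed
  qed
  then show ?thesis by blast
qed



lemma closed_graph:
  fixes T :: "'a::banach \<Rightarrow> 'b::banach"
  assumes lin: "linear T"
    and cg: "\<And>y z (f::nat\<Rightarrow>'a). f \<longlonglongrightarrow> y \<Longrightarrow> (\<lambda>n. T (f n)) \<longlonglongrightarrow> z \<Longrightarrow> T y = z"
  shows "bounded_linear T"
proof -
  interpret L: linear T by fact
  define E where "E n = closure {y. norm (T y) \<le> real n}" for n
  have "\<Union>(range E) = UNIV"
  proof -
    have "y \<in> \<Union>(range E)" for y
    proof -
      obtain n where "norm (T y) \<le> real n" using real_arch_simple by blast
      then have "y \<in> E n" unfolding E_def by (meson closure_subset mem_Collect_eq subsetD)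
      then show ?thesis by auto
    qed
    then show ?thesis by blast
  qed
  moreover have "closed (E n)" for n unfolding E_def by simp
  ultimately obtain n y0 r where r: "r > 0" and sub: "ball y0 r \<subseteq> E n"
    using baire_banach[of E] by blast
  define c where "c = 2 * real n"
  have c0: "c \<ge> 0" by (simp add: c_def)
  have stepB: "\<exists>y'. norm (T y') \<le> c \<and> norm (y - y') < e" if y: "norm y < r" and e: "e > 0" for y e
  proof -
    have "y0 + y \<in> ball y0 r" using y by (simp add: dist_norm)
    moreover have "y0 \<in> ball y0 r" using r by simp
    ultimately have "y0 + y \<in> E n" "y0 \<in> E n" using sub by blast+
    then have "\<exists>a\<in>{y. norm (T y) \<le> real n}. dist a (y0 + y) < e/2"
       "\<exists>b\<in>{y. norm (T y) \<le> real n}. dist b y0 < e/2"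
      unfolding E_def closure_approachable using e half_gt_zero by blast+
    then obtain a b where a: "norm (T a) \<le> n" "dist a (y0 + y) < e/2"
      and b: "norm (T b) \<le> n" "dist b y0 < e/2" unfolding mem_Collect_eq by blast
    have "norm (T (a - b)) \<le> c"
      using a b norm_triangle_ineq4[of "T a" "T b"] by (simp add: L.diff c_def)
    moreover have "norm (y - (a - b)) < e"
    proof -
      have "norm (y - (a - b)) = norm ((y0 + y - a) + (b - y0))" by (simp add: algebra_simps)
      also have "\<dots> \<le> norm (y0 + y - a) + norm (b - y0)"
        by (rule norm_triangle_ineq)
      finally have "norm (y - (a - b)) \<le> norm (y0 + y - a) + norm (b - y0)" .
      moreover have "norm (y0 + y - a) < e/2" "norm (b - y0) < e/2"
        using a b by (simp_all add: dist_norm norm_minus_commute)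
      ultimately show ?thesis by linarith
    qed
    ultimately show ?thesis by blast
  qed
  define K where "K = 2 * c / r"
  have K0: "K \<ge> 0" using c0 r by (simp add: K_def)
  have stepC: "\<exists>y'. norm (T y') \<le> K * norm y \<and> norm (y - y') < e" if e: "e > 0" for y e
  proof (cases "y = 0")
    case True then show ?thesis using e by (intro exI[of _ 0]) (simp add: L.zero)
  next
    case False
    define l where "l = r / (2 * norm y)"
    have l: "l > 0" using False r by (simp add: l_def)
    have "norm (l *\<^sub>R y) < r" using False r by (simp add: l_def)
    then obtain y'' where y'': "norm (T y'') \<le> c" "norm (l *\<^sub>R y - y'') < l * e"
      using stepB l e by (meson mult_pos_pos)
    have "norm (T ((1/l) *\<^sub>R y'')) = (1/l) * norm (T y'')" using l by (simp add: L.scale)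
    also have "\<dots> \<le> (1/l) * c" using y'' l by (simp add: divide_right_mono)
    also have "(1/l) * c = K * norm y" using False r by (simp add: K_def l_def field_simps)
    finally have 1: "norm (T ((1/l) *\<^sub>R y'')) \<le> K * norm y" .
    have "y - (1/l) *\<^sub>R y'' = (1/l) *\<^sub>R (l *\<^sub>R y - y'')" using l by (simp add: algebra_simps)
    then have "norm (y - (1/l) *\<^sub>R y'') = (1/l) * norm (l *\<^sub>R y - y'')" using l by simp
    also have "\<dots> < (1/l) * (l * e)" using y'' l by (intro mult_strict_left_mono) auto
    also have "\<dots> = e" using l by simp
    finally show ?thesis using 1 by blast
  qed
  then have "\<forall>y e. \<exists>y'. e > 0 \<longrightarrow> norm (T y') \<le> K * norm y \<and> norm (y - y') < e"
    by auto
  then obtain g where g0: "\<forall>y e. e > 0 \<longrightarrow> norm (T (g y e)) \<le> K * norm y \<and> norm (y - g y e) < e"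
    by metis
  then have g: "\<And>y e. e > 0 \<Longrightarrow> norm (T (g y e)) \<le> K * norm y \<and> norm (y - g y e) < e"
    by auto
  have bound: "norm (T y) \<le> 2 * K * norm y" for y
  proof (cases "y = 0")
    case True then show ?thesis by (simp add: L.zero)
  next
    case False
    define ep where "ep k = norm y / 2 ^ Suc k" for k :: nat
    have ep: "ep k > 0" for k using False by (simp add: ep_def)
    define e where "e = rec_nat y (\<lambda>k ek. ek - g ek (ep k))"
    have e0: "e 0 = y" and eS: "e (Suc k) = e k - g (e k) (ep k)" for k by (simp_all add: e_def)
    define u where "u k = g (e k) (ep k)" for k
    have en: "norm (e k) \<le> norm y / 2 ^ k" for k
    proof (cases k)
      case 0 then show ?thesis by (simp add: e0)
    next
      case (Suc m)
      have "norm (e (Suc m)) < ep m" using g[OF ep[of m], of "e m"] by (simp add: eS)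
      then show ?thesis using Suc by (simp add: ep_def)
    qed
    have Tu: "norm (T (u k)) \<le> K * norm y * (1/2) ^ k" for k
    proof -
      have "norm (T (u k)) \<le> K * norm (e k)" using g[OF ep[of k], of "e k"] by (simp add: u_def)
      also have "\<dots> \<le> K * (norm y / 2 ^ k)" using mult_left_mono[OF en K0] by simp
      finally show ?thesis by (simp add: power_divide)
    qed
    have tel: "(\<Sum>k<m. u k) = y - e m" for m
      by (induction m) (simp_all add: e0 eS u_def)
    have "e \<longlonglongrightarrow> 0"
    proof (rule tendsto_norm_zero_cancel, rule Lim_null_comparison)
      show "\<forall>\<^sub>F k in sequentially. norm (norm (e k)) \<le> norm y * (1/2) ^ k"
        using en by (simp add: power_divide)
      show "(\<lambda>k. norm y * (1/2::real) ^ k) \<longlonglongrightarrow> 0"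
        by (intro tendsto_mult_right_zero LIMSEQ_power_zero) simp
    qed
    then have "(\<lambda>m. y - e m) \<longlonglongrightarrow> y - 0" by (intro tendsto_intros)
    then have lim1: "(\<lambda>m. \<Sum>k<m. u k) \<longlonglongrightarrow> y" by (simp add: tel)
    have sn: "summable (\<lambda>k. K * norm y * (1/2::real) ^ k)"
      by (intro summable_mult complete_algebra_summable_geometric) simp
    have sT: "summable (\<lambda>k. norm (T (u k)))"
      by (rule summable_comparison_test[OF _ sn]) (use Tu in auto)
    then have sT': "summable (\<lambda>k. T (u k))" by (rule summable_norm_cancel)
    have "(\<lambda>m. \<Sum>k<m. T (u k)) \<longlonglongrightarrow> (\<Sum>k. T (u k))"
      using sT' summable_LIMSEQ by blast
    then have lim2: "(\<lambda>m. T (\<Sum>k<m. u k)) \<longlonglongrightarrow> (\<Sum>k. T (u k))" by (simp add: L.sum)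
    have "T y = (\<Sum>k. T (u k))" by (rule cg[OF lim1 lim2])
    then have "norm (T y) \<le> (\<Sum>k. norm (T (u k)))" using summable_norm[OF sT] by simp
    also have "\<dots> \<le> (\<Sum>k. K * norm y * (1/2::real) ^ k)"
      by (rule suminf_le[OF _ sT sn]) (use Tu in auto)
    also have "\<dots> = K * norm y * 2"
      by (simp add: suminf_mult suminf_geometric)
    finally show ?thesis by simp
  qed
  show ?thesis
    by (rule bounded_linear_intro[where K="2*K"]) (simp_all add: L.add L.scale, use bound in \<open>simp add: algebra_simps\<close>)
qed



lemma sg_bl: "C0_semigroup S \<Longrightarrow> t \<ge> 0 \<Longrightarrow> bounded_linear (S t)"
  unfolding C0_semigroup_def by blast

lemma sg_comp: "C0_semigroup S \<Longrightarrow> t \<ge> 0 \<Longrightarrow> s \<ge> 0 \<Longrightarrow> S (t + s) v = S t (S s v)"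
  unfolding C0_semigroup_def by (metis comp_apply)

lemma sg_zero: "C0_semigroup S \<Longrightarrow> S 0 v = v"
  unfolding C0_semigroup_def by simp

lemma sg_diff: "C0_semigroup S \<Longrightarrow> t \<ge> 0 \<Longrightarrow> S t (a - b) = S t a - S t b"
proof -
  assume "C0_semigroup S" "t \<ge> 0"
  then interpret L: bounded_linear "S t" by (rule sg_bl)
  show ?thesis by (rule L.diff)
qed

lemma sg_right: "C0_semigroup S \<Longrightarrow> ((\<lambda>t. S t x) \<longlongrightarrow> x) (at_right 0)"
  unfolding C0_semigroup_def by blast

lemma sg_right_eps:
  assumes "C0_semigroup S" "e > 0"
  shows "\<exists>d>0. \<forall>h. 0 \<le> h \<and> h < d \<longrightarrow> norm (S h x - x) < e"
proof -
  have "eventually (\<lambda>h. dist (S h x) x < e) (at_right 0)"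
    using tendstoD[OF sg_right[OF assms(1), of x] assms(2)] .
  then obtain b where b: "b > 0" "\<And>h. h > 0 \<Longrightarrow> h < b \<Longrightarrow> dist (S h x) x < e"
    unfolding eventually_at_right[OF zero_less_one] by auto
  have "norm (S h x - x) < e" if "0 \<le> h" "h < b" for h
  proof (cases "h = 0")
    case True then show ?thesis using sg_zero[OF assms(1)] assms(2) by simp
  next
    case False then show ?thesis using b that by (simp add: dist_norm)
  qed
  then show ?thesis using b by blast
qed

lemma sg_local_bound:
  fixes S :: "real \<Rightarrow> 'x::banach \<Rightarrow> 'x"
  assumes sg: "C0_semigroup S"
  shows "\<exists>d>0. \<exists>M. \<forall>t\<in>{0..d}. onorm (S t) \<le> M"
proof (rule ccontr)
  assume H: "\<not> ?thesis"
  have "\<forall>n::nat. \<exists>t. t \<in> {0..1/(real n + 1)} \<and> onorm (S t) > real n"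
  proof
    fix n :: nat
    have "1/(real n + 1) > 0" by simp
    then have "\<not> (\<forall>t\<in>{0..1/(real n + 1)}. onorm (S t) \<le> real n)" using H by blast
    then show "\<exists>t. t \<in> {0..1/(real n + 1)} \<and> onorm (S t) > real n" by (auto simp: not_le)
  qed
  then obtain t where t: "\<And>n. t n \<in> {0..1/(real n + 1)}" "\<And>n. onorm (S (t n)) > real n"
    by metis
  have "\<exists>B. \<forall>n\<in>UNIV. norm (S (t n) x) \<le> B" for x
  proof -
    have "(\<lambda>n. S (t n) x) \<longlonglongrightarrow> x"
    proof (rule LIMSEQ_I)
      fix r :: real assume r: "r > 0"
      obtain d where d: "d > 0" "\<And>h. 0 \<le> h \<and> h < d \<Longrightarrow> norm (S h x - x) < r"
        using sg_right_eps[OF sg r] by blast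
      obtain N :: nat where N: "1 / d < real N" using reals_Archimedean2 by blast
      have "norm (S (t n) x - x) < r" if "n \<ge> N" for n
      proof -
        have "1/(real n + 1) < d"
        proof -
          have "1 / d < real n + 1" using N that by linarith
          then show ?thesis using d(1) by (simp add: field_simps)
        qed
        then have "t n < d" "t n \<ge> 0" using t(1)[of n] by auto
        then show ?thesis using d(2) by blast
      qed
      then show "\<exists>N. \<forall>n\<ge>N. norm (S (t n) x - x) < r" by blast
    qed
    then have "Bseq (\<lambda>n. S (t n) x)" using convergent_imp_Bseq convergentI by blast
    then show ?thesis by (meson BseqD UNIV_I)
  qed
  moreover have "\<And>n. n \<in> UNIV \<Longrightarrow> bounded_linear (S (t n))"
    using sg_bl[OF sg] t(1) by auto
  ultimately obtain M where M: "\<forall>n\<in>UNIV. onorm (S (t n)) \<le> M"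
    using ubp[of UNIV "\<lambda>n. S (t n)"] by blast
  obtain n :: nat where "M < real n" using reals_Archimedean2 by blast
  moreover have "onorm (S (t n)) \<le> M" using M by blast
  ultimately show False using t(2)[of n] by linarith
qed

lemma sg_bound:
  fixes S :: "real \<Rightarrow> 'x::banach \<Rightarrow> 'x"
  assumes sg: "C0_semigroup S"
  shows "\<exists>M\<ge>1. \<forall>t\<in>{0..t1}. onorm (S t) \<le> M"
proof -
  obtain d M0 where d: "d > 0" and M0: "\<forall>t\<in>{0..d}. onorm (S t) \<le> M0"
    using sg_local_bound[OF sg] by blast
  define M where "M = max 1 M0"
  have M1: "M \<ge> 1" by (simp add: M_def)
  have Md: "\<forall>t\<in>{0..d}. onorm (S t) \<le> M" using M0 by (force simp: M_def)
  have ind: "\<forall>t\<in>{0..(real n + 1) * d}. onorm (S t) \<le> M ^ (n + 1)" for n :: nat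
  proof (induction n)
    case 0 then show ?case using Md by simp
  next
    case (Suc n)
    show ?case
    proof
      fix t assume t: "t \<in> {0..(real (Suc n) + 1) * d}"
      show "onorm (S t) \<le> M ^ (Suc n + 1)"
      proof (cases "t \<le> d")
        case True
        then have "onorm (S t) \<le> M" using Md t by auto
        also have "M \<le> M ^ (Suc n + 1)" using power_increasing[of 1 "Suc n + 1" M] M1 by simp
        finally show ?thesis .
      next
        case False
        have eq: "S t = S d \<circ> S (t - d)"
        proof
          fix v show "S t v = (S d \<circ> S (t - d)) v"
            using sg_comp[OF sg, of d "t - d" v] d False by simp
        qed
        have tm: "t - d \<in> {0..(real n + 1) * d}" using t False by (auto simp: algebra_simps)
        have "onorm (S t) \<le> onorm (S d) * onorm (S (t - d))"
          unfolding eq using sg_bl[OF sg] d False by (intro onorm_compose) auto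
        also have "\<dots> \<le> M * M ^ (n + 1)"
        proof (rule mult_mono)
          show "onorm (S d) \<le> M" using Md d by auto
          show "onorm (S (t - d)) \<le> M ^ (n + 1)" using Suc.IH tm by blast
          show "0 \<le> M" using M1 by simp
          show "0 \<le> onorm (S (t - d))" using sg_bl[OF sg] False d by (intro onorm_pos_le) auto
        qed
        also have "\<dots> = M ^ (Suc n + 1)" by simp
        finally show ?thesis .
      qed
    qed
  qed
  obtain n :: nat where n: "t1 / d < real n" using reals_Archimedean2 by blast
  have "t1 \<le> (real n + 1) * d"
  proof -
    have "t1 < real n * d" using n d by (simp add: field_simps)
    then show ?thesis using d by (simp add: algebra_simps)
  qed
  then have "\<forall>t\<in>{0..t1}. onorm (S t) \<le> M ^ (n + 1)" using ind[of n] by auto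
  moreover have "M ^ (n + 1) \<ge> 1" using one_le_power[OF M1] by blast
  ultimately show ?thesis by blast
qed

lemma sg_norm_bound:
  assumes sg: "C0_semigroup S" and M: "\<forall>t\<in>{0..t1}. onorm (S t) \<le> M"
    and t: "0 \<le> t" "t \<le> t1"
  shows "norm (S t v) \<le> M * norm v"
proof -
  have "norm (S t v) \<le> onorm (S t) * norm v" using onorm[OF sg_bl[OF sg t(1)]] .
  also have "\<dots> \<le> M * norm v" using M t by (intro mult_right_mono) auto
  finally show ?thesis .
qed

lemma sg_cont:
  fixes S :: "real \<Rightarrow> 'x::banach \<Rightarrow> 'x"
  assumes sg: "C0_semigroup S"
  shows "continuous_on {0..} (\<lambda>t. S t x)"
  unfolding continuous_on_iff
proof (intro ballI allI impI)
  fix t0 e :: real assume t0: "t0 \<in> {0..}" and e: "e > 0"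
  obtain M where M1: "M \<ge> 1" and M: "\<forall>t\<in>{0..t0+1}. onorm (S t) \<le> M"
    using sg_bound[OF sg] by blast
  obtain d where d: "d > 0" "\<And>h. 0 \<le> h \<and> h < d \<Longrightarrow> norm (S h x - x) < e / M"
    using sg_right_eps[OF sg, of "e / M" x] e M1 by auto
  have "dist (S t x) (S t0 x) < e" if t: "t \<in> {0..}" "dist t t0 < min d 1" for t
  proof (cases "t0 \<le> t")
    case True
    have "S t x - S t0 x = S t0 (S (t - t0) x - x)"
      using sg_comp[OF sg, of t0 "t - t0" x] True t0 sg_diff[OF sg, of t0]
      by auto
    then have "norm (S t x - S t0 x) \<le> M * norm (S (t - t0) x - x)"
      using sg_norm_bound[OF sg M, of t0] t0 by auto
    also have "\<dots> < M * (e / M)"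
      using d(2)[of "t - t0"] True t M1 by (intro mult_strict_left_mono) (auto simp: dist_real_def)
    also have "\<dots> = e" using M1 by simp
    finally show ?thesis by (simp add: dist_norm)
  next
    case False
    have "S t0 x = S t (S (t0 - t) x)"
      using sg_comp[OF sg, of t "t0 - t" x] False t by auto
    then have "S t x - S t0 x = S t (x - S (t0 - t) x)"
      using sg_diff[OF sg, of t] t by auto
    then have "norm (S t x - S t0 x) \<le> M * norm (x - S (t0 - t) x)"
      using sg_norm_bound[OF sg M, of t] t False t0 by auto
    also have "\<dots> < M * (e / M)"
      using d(2)[of "t0 - t"] False t M1 by (intro mult_strict_left_mono) (auto simp: dist_real_def norm_minus_commute)
    also have "\<dots> = e" using M1 by simp
    finally show ?thesis by (simp add: dist_norm)
  qed
  then show "\<exists>d>0. \<forall>t\<in>{0..}. dist t t0 < d \<longrightarrow> dist (S t x) (S t0 x) < e"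
    using d(1) by (intro exI[of _ "min d 1"]) auto
qed



lemma sg_joint:
  fixes S :: "real \<Rightarrow> 'x::banach \<Rightarrow> 'x"
  assumes sg: "C0_semigroup S" and cont: "continuous_on {a..b} \<psi>"
  shows "continuous_on {a..b} (\<lambda>r. S (b - r) (\<psi> r))"
  unfolding continuous_on_iff
proof (intro ballI allI impI)
  fix r0 e :: real assume r0: "r0 \<in> {a..b}" and e: "e > 0"
  obtain M where M1: "M \<ge> 1" and M: "\<forall>t\<in>{0..b-a}. onorm (S t) \<le> M"
    using sg_bound[OF sg] by blast
  have c1: "continuous_on {a..b} (\<lambda>r. S (b - r) (\<psi> r0))"
    by (rule continuous_on_compose2[OF sg_cont[OF sg, of "\<psi> r0"]]) (auto intro!: continuous_intros)
  obtain d1 where d1: "d1 > 0" "\<forall>r\<in>{a..b}. dist r r0 < d1 \<longrightarrow> dist (S (b - r) (\<psi> r0)) (S (b - r0) (\<psi> r0)) < e/2"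
    using continuous_on_iff[THEN iffD1, OF c1, rule_format, OF r0, of "e/2"] e by auto
  obtain d2 where d2: "d2 > 0" "\<forall>r\<in>{a..b}. dist r r0 < d2 \<longrightarrow> dist (\<psi> r) (\<psi> r0) < e/(2*M)"
    using continuous_on_iff[THEN iffD1, OF cont, rule_format, OF r0, of "e/(2*M)"] e M1 by auto
  have "dist (S (b - r) (\<psi> r)) (S (b - r0) (\<psi> r0)) < e" if r: "r \<in> {a..b}" "dist r r0 < min d1 d2" for r
  proof -
    have "S (b - r) (\<psi> r) - S (b - r0) (\<psi> r0) = S (b - r) (\<psi> r - \<psi> r0) + (S (b - r) (\<psi> r0) - S (b - r0) (\<psi> r0))"
      using sg_diff[OF sg, of "b - r"] r by auto
    then have "norm (S (b - r) (\<psi> r) - S (b - r0) (\<psi> r0)) \<le> norm (S (b - r) (\<psi> r - \<psi> r0)) + norm (S (b - r) (\<psi> r0) - S (b - r0) (\<psi> r0))"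
      by (metis norm_triangle_ineq)
    moreover have "norm (S (b - r) (\<psi> r - \<psi> r0)) \<le> M * norm (\<psi> r - \<psi> r0)"
      using sg_norm_bound[OF sg M, of "b - r"] r by auto
    moreover have "M * norm (\<psi> r - \<psi> r0) < M * (e / (2*M))"
      using d2 r M1 by (intro mult_strict_left_mono) (auto simp: dist_norm)
    moreover have "M * (e / (2*M)) = e/2" using M1 by simp
    moreover have "norm (S (b - r) (\<psi> r0) - S (b - r0) (\<psi> r0)) < e/2"
      using d1 r by (auto simp: dist_norm)
    ultimately show ?thesis by (simp add: dist_norm)
  qed
  then show "\<exists>d>0. \<forall>r\<in>{a..b}. dist r r0 < d \<longrightarrow> dist (S (b - r) (\<psi> r)) (S (b - r0) (\<psi> r0)) < e"
    using d1 d2 by (intro exI[of _ "min d1 d2"]) auto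
qed

lemma restr:
  fixes j :: "'y::banach \<Rightarrow> 'x::banach"
  assumes jbl: "bounded_linear j" and jinj: "inj j" and Abl: "bounded_linear A"
    and inv: "A ` range j \<subseteq> range j"
  shows "bounded_linear (\<lambda>y. inv j (A (j y)))" and "\<And>y. j (inv j (A (j y))) = A (j y)"
proof -
  interpret J: bounded_linear j by fact
  interpret A: bounded_linear A by fact
  have jT: "j (inv j (A (j y))) = A (j y)" for y
    using inv by (intro f_inv_into_f) blast
  then show "\<And>y. j (inv j (A (j y))) = A (j y)" .
  let ?T = "\<lambda>y. inv j (A (j y))"
  have add: "?T (a + b) = ?T a + ?T b" for a b
  proof -
    have "j (?T (a + b)) = A (j (a + b))" by (rule jT)
    also have "\<dots> = j (?T a) + j (?T b)" by (simp only: J.add A.add jT)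
    also have "\<dots> = j (?T a + ?T b)" by (simp only: J.add)
    finally have "j (?T (a + b)) = j (?T a + ?T b)" .
    then show ?thesis using jinj by (simp add: inj_eq)
  qed
  have scale: "?T (c *\<^sub>R a) = c *\<^sub>R ?T a" for c a
  proof -
    have "j (?T (c *\<^sub>R a)) = A (j (c *\<^sub>R a))" by (rule jT)
    also have "\<dots> = c *\<^sub>R j (?T a)" by (simp only: J.scale A.scale jT)
    also have "\<dots> = j (c *\<^sub>R ?T a)" by (simp only: J.scale)
    finally have "j (?T (c *\<^sub>R a)) = j (c *\<^sub>R ?T a)" .
    then show ?thesis using jinj by (simp add: inj_eq)
  qed
  have lin: "linear ?T" by (rule linearI[OF add scale])
  show "bounded_linear ?T"
  proof (rule closed_graph[OF lin])
    fix y z and f :: "nat \<Rightarrow> 'y"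
    assume f: "f \<longlonglongrightarrow> y" and Tf: "(\<lambda>n. ?T (f n)) \<longlonglongrightarrow> z"
    have "(\<lambda>n. A (j (f n))) \<longlonglongrightarrow> A (j y)"
      by (intro A.tendsto J.tendsto f)
    moreover have "(\<lambda>n. j (?T (f n))) \<longlonglongrightarrow> j z" by (intro J.tendsto Tf)
    then have "(\<lambda>n. A (j (f n))) \<longlonglongrightarrow> j z" by (simp add: jT)
    ultimately have "A (j y) = j z" by (rule LIMSEQ_unique)
    then have "j (?T y) = j z" using jT[of y] by simp
    then show "?T y = z" using jinj by (simp add: inj_eq)
  qed
qed

lemma part2:
  fixes T :: "real \<Rightarrow> 'y::banach \<Rightarrow> 'y"
  assumes bl: "\<forall>t\<ge>0. bounded_linear (T t)"
    and cont: "\<forall>y. continuous_on {0..} (\<lambda>t. T t y)"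
  shows "\<forall>t1>0. bounded ((\<lambda>t. onorm (T t)) ` {0..t1})"
proof (intro allI impI)
  fix t1 :: real assume "t1 > 0"
  have "\<exists>B. \<forall>t\<in>{0..t1}. norm (T t y) \<le> B" for y
  proof -
    have "continuous_on {0..t1} (\<lambda>t. T t y)" using cont[rule_format, of y] by (rule continuous_on_subset) auto
    then have "compact ((\<lambda>t. T t y) ` {0..t1})" by (intro compact_continuous_image) auto
    then have "bounded ((\<lambda>t. T t y) ` {0..t1})" by (rule compact_imp_bounded)
    then show ?thesis unfolding bounded_iff by auto
  qed
  then obtain M where M: "\<forall>t\<in>{0..t1}. onorm (T t) \<le> M"
    using ubp[of "{0..t1}" T] bl by auto
  show "bounded ((\<lambda>t. onorm (T t)) ` {0..t1})"
    unfolding bounded_iff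
  proof (intro exI ballI)
    fix x assume "x \<in> (\<lambda>t. onorm (T t)) ` {0..t1}"
    then obtain t where t: "t \<in> {0..t1}" "x = onorm (T t)" by auto
    then have "0 \<le> x" using bl onorm_pos_le by auto
    then show "norm x \<le> M" using M t by auto
  qed
qed



locale p3 =
  fixes j :: "'y::banach \<Rightarrow> 'x::banach" and S :: "real \<Rightarrow> 'x \<Rightarrow> 'x" and \<eta> :: "real \<Rightarrow> real"
  assumes jbl: "bounded_linear j" and jinj: "inj j" and sg: "C0_semigroup S"
    and invY: "\<And>t. t \<ge> 0 \<Longrightarrow> S t ` range j \<subseteq> range j"
    and bnd: "\<forall>t1>0. bounded ((\<lambda>t. onorm (\<lambda>y. inv j (S t (j y)))) ` {0..t1})"
    and etapos: "\<forall>\<delta>>0. \<eta> \<delta> > 0" and etalim: "(\<eta> \<longlongrightarrow> 0) (at_right 0)"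
    and H: "\<forall>s0 s1 (\<phi>::real \<Rightarrow> 'x). 0 \<le> s0 \<and> s0 < s1 \<and> continuous_on {s0..s1} \<phi> \<longrightarrow>
              integral {s0..s1} (\<lambda>s. S (s1 - s) (\<phi> s)) \<in> range j \<and>
              norm (inv j (integral {s0..s1} (\<lambda>s. S (s1 - s) (\<phi> s))))
                \<le> \<eta> (s1 - s0) * Sup ((\<lambda>s. norm (\<phi> s)) ` {s0..s1})"
begin

abbreviation K where "K a b \<psi> \<equiv> integral {a..b} (\<lambda>r. S (b - r) (\<psi> r))"
abbreviation T where "T t y \<equiv> inv j (S t (j y))"

lemma Tbl: "t \<ge> 0 \<Longrightarrow> bounded_linear (\<lambda>y. T t y)"
  using restr(1)[OF jbl jinj sg_bl[OF sg] invY] by blast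

lemma jT: "t \<ge> 0 \<Longrightarrow> j (T t y) = S t (j y)"
  using restr(2)[OF jbl jinj sg_bl[OF sg] invY] by blast

lemma invj: "j x = v \<Longrightarrow> inv j v = x"
  using inv_f_eq[OF jinj] by blast

lemma jinv: "v \<in> range j \<Longrightarrow> j (inv j v) = v"
  by (rule f_inv_into_f)

lemma Mbound: assumes "t1 > 0" shows "\<exists>M\<ge>1. \<forall>t\<in>{0..t1}. \<forall>y. norm (T t y) \<le> M * norm y"
proof -
  obtain a where a: "\<forall>x\<in>(\<lambda>t. onorm (\<lambda>y. T t y)) ` {0..t1}. norm x \<le> a"
    using bnd assms unfolding bounded_iff by blast
  have "norm (T t y) \<le> max 1 a * norm y" if t: "t \<in> {0..t1}" for t y
  proof -
    have "norm (T t y) \<le> onorm (\<lambda>y. T t y) * norm y" using onorm[OF Tbl] t by auto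
    also have "\<dots> \<le> max 1 a * norm y"
    proof (rule mult_right_mono)
      have "norm (onorm (\<lambda>y. T t y)) \<le> a" using a t by blast
      then show "onorm (\<lambda>y. T t y) \<le> max 1 a" by auto
    qed simp
    finally show ?thesis .
  qed
  then show ?thesis by (intro exI[of _ "max 1 a"]) auto
qed

lemma Hs:
  assumes "0 \<le> a" "a < b" "continuous_on {a..b} \<psi>"
  shows "K a b \<psi> \<in> range j" "norm (inv j (K a b \<psi>)) \<le> \<eta> (b - a) * Sup ((\<lambda>s. norm (\<psi> s)) ` {a..b})"
  using H assms by blast+

lemma Hb:
  assumes "0 \<le> a" "a < b" "continuous_on {a..b} \<psi>" "\<forall>r\<in>{a..b}. norm (\<psi> r) \<le> B"
  shows "norm (inv j (K a b \<psi>)) \<le> \<eta> (b - a) * B"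
proof -
  have "Sup ((\<lambda>s. norm (\<psi> s)) ` {a..b}) \<le> B"
    using assms by (intro cSup_least) auto
  moreover have "\<eta> (b - a) \<ge> 0" using etapos assms by (auto intro: less_imp_le)
  ultimately show ?thesis using Hs(2)[OF assms(1-3)] by (meson mult_left_mono order_trans)
qed

lemma kint:
  assumes "continuous_on {a..b} \<psi>"
  shows "(\<lambda>r. S (b - r) (\<psi> r)) integrable_on {a..b}"
  by (rule integrable_continuous_interval[OF sg_joint[OF sg assms]])

lemma ksplit:
  assumes "0 \<le> a" "a \<le> c" "c \<le> b" and cont: "continuous_on {a..b} \<psi>"
  shows "K a b \<psi> = S (b - c) (K a c \<psi>) + K c b \<psi>"
proof -
  have contc: "continuous_on {a..c} \<psi>" using cont by (rule continuous_on_subset) (use assms in auto)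
  have "integral {a..c} (\<lambda>r. S (b - r) (\<psi> r)) = integral {a..c} (S (b - c) \<circ> (\<lambda>r. S (c - r) (\<psi> r)))"
  proof (rule integral_cong)
    fix r assume "r \<in> {a..c}"
    then show "S (b - r) (\<psi> r) = (S (b - c) \<circ> (\<lambda>r. S (c - r) (\<psi> r))) r"
      using sg_comp[OF sg, of "b - c" "c - r" "\<psi> r"] assms by auto
  qed
  also have "\<dots> = S (b - c) (K a c \<psi>)"
    by (rule integral_linear[OF kint[OF contc] sg_bl[OF sg]]) (use assms in auto)
  finally have 1: "integral {a..c} (\<lambda>r. S (b - r) (\<psi> r)) = S (b - c) (K a c \<psi>)" .
  have "K a b \<psi> = integral {a..c} (\<lambda>r. S (b - r) (\<psi> r)) + K c b \<psi>"
    using Henstock_Kurzweil_Integration.integral_combine[OF assms(2,3) kint[OF cont]] by simp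
  then show ?thesis using 1 by simp
qed

lemma Ysplit:
  assumes "0 \<le> a" "a < c" "c < b" and cont: "continuous_on {a..b} \<psi>"
  shows "inv j (K a b \<psi>) = T (b - c) (inv j (K a c \<psi>)) + inv j (K c b \<psi>)"
proof (rule invj)
  have contc: "continuous_on {a..c} \<psi>" using cont by (rule continuous_on_subset) (use assms in auto)
  have contc2: "continuous_on {c..b} \<psi>" using cont by (rule continuous_on_subset) (use assms in auto)
  have r1: "K a c \<psi> \<in> range j" by (rule Hs(1)[OF assms(1,2) contc])
  have r2: "K c b \<psi> \<in> range j" by (rule Hs(1)[OF _ assms(3) contc2]) (use assms in auto)
  interpret J: bounded_linear j by (rule jbl)
  have "j (T (b - c) (inv j (K a c \<psi>)) + inv j (K c b \<psi>)) = S (b - c) (K a c \<psi>) + K c b \<psi>"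
    unfolding J.add jT[of "b - c", OF less_imp_le[OF diff_gt_0_iff_gt[THEN iffD2, OF assms(3)]]]
    by (simp only: jinv[OF r1] jinv[OF r2])
  also have "\<dots> = K a b \<psi>" using ksplit[OF assms(1) _ _ cont, of c] assms by simp
  finally show "j (T (b - c) (inv j (K a c \<psi>)) + inv j (K c b \<psi>)) = K a b \<psi>" .
qed

end


lemma aux_frac: "(0::real) \<le> x \<Longrightarrow> 0 < e \<Longrightarrow> x * (e / (2 * (x + 1))) < e / 2"
proof -
  assume x: "0 \<le> x" and e: "0 < e"
  have "x * (e / (2 * (x + 1))) = (e / 2) * (x / (x + 1))" using x by (simp add: field_simps)
  also have "\<dots> < (e / 2) * 1" using x e by (intro mult_strict_left_mono) auto
  finally show ?thesis by simp
qed

context p3 begin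

lemma eta_small: assumes "e > 0" shows "\<exists>b>0. \<forall>h. 0 < h \<and> h < b \<longrightarrow> \<eta> h < e"
proof -
  have "eventually (\<lambda>h. dist (\<eta> h) 0 < e) (at_right 0)" using tendstoD[OF etalim assms] .
  then obtain b where "b > 0" "\<And>h. h > 0 \<Longrightarrow> h < b \<Longrightarrow> dist (\<eta> h) 0 < e"
    unfolding eventually_at_right[OF zero_less_one] by auto
  then show ?thesis by (intro exI[of _ b]) (force simp: dist_real_def abs_less_iff)
qed

lemma Cbound:
  assumes t1: "t1 > 0"
  shows "\<exists>C\<ge>0. \<forall>a b \<psi> B. 0 \<le> a \<longrightarrow> a < b \<longrightarrow> b \<le> t1 \<longrightarrow> continuous_on {a..b} \<psi> \<longrightarrow>
            (\<forall>r\<in>{a..b}. norm (\<psi> r) \<le> B) \<longrightarrow> norm (inv j (K a b \<psi>)) \<le> C * B"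
proof -
  obtain M where M1: "M \<ge> 1" and M: "\<forall>t\<in>{0..t1}. \<forall>y. norm (T t y) \<le> M * norm y"
    using Mbound[OF t1] by blast
  obtain b0 where b0: "b0 > 0" "\<forall>h. 0 < h \<and> h < b0 \<longrightarrow> \<eta> h < 1"
    using eta_small[of 1] by auto
  define d0 where "d0 = b0 / 2"
  have d0: "d0 > 0" "d0 < b0" using b0 by (auto simp: d0_def)
  have B0: "B \<ge> 0" if "a < b" "\<forall>r\<in>{a..b}. norm (\<psi> r) \<le> B" for a b B and \<psi> :: "real \<Rightarrow> 'x"
  proof -
    have "norm (\<psi> a) \<le> B" using that by auto
    then show ?thesis by (meson norm_ge_zero order_trans)
  qed
  have base: "norm (inv j (K a b \<psi>)) \<le> B"
    if h: "0 \<le> a" "a < b" "b - a \<le> d0" "continuous_on {a..b} \<psi>" "\<forall>r\<in>{a..b}. norm (\<psi> r) \<le> B" for a b \<psi> B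
  proof -
    have "norm (inv j (K a b \<psi>)) \<le> \<eta> (b - a) * B" by (rule Hb[OF h(1,2,4,5)])
    also have "\<dots> \<le> 1 * B"
      using b0(2) d0 h B0[OF h(2,5)] by (intro mult_right_mono) (auto intro: less_imp_le)
    finally show ?thesis by simp
  qed
  have ind: "\<forall>a b \<psi> B. 0 \<le> a \<longrightarrow> a < b \<longrightarrow> b \<le> t1 \<longrightarrow> b - a \<le> real n * d0 \<longrightarrow> continuous_on {a..b} \<psi> \<longrightarrow>
            (\<forall>r\<in>{a..b}. norm (\<psi> r) \<le> B) \<longrightarrow> norm (inv j (K a b \<psi>)) \<le> real n * (M + 1) * B" for n :: nat
  proof (induction n)
    case 0 show ?case by auto
  next
    case (Suc n)
    show ?case
    proof (intro allI impI)
      fix a b B and \<psi> :: "real \<Rightarrow> 'x"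
      assume a: "0 \<le> a" and ab: "a < b" and bt: "b \<le> t1" and len: "b - a \<le> real (Suc n) * d0"
        and cont: "continuous_on {a..b} \<psi>" and bd: "\<forall>r\<in>{a..b}. norm (\<psi> r) \<le> B"
      have Bn: "B \<ge> 0" by (rule B0[OF ab bd])
      show "norm (inv j (K a b \<psi>)) \<le> real (Suc n) * (M + 1) * B"
      proof (cases "b - a \<le> d0")
        case True
        then have "norm (inv j (K a b \<psi>)) \<le> B" by (rule base[OF a ab _ cont bd])
        also have "B \<le> (real (Suc n) * (M + 1)) * B"
        proof -
          have "1 * 1 \<le> real (Suc n) * (M + 1)" using M1
            by (intro mult_mono) auto
          then have "1 * B \<le> (real (Suc n) * (M + 1)) * B" using Bn by (intro mult_right_mono) auto
          then show ?thesis by simp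
        qed
        finally show ?thesis by simp
      next
        case False
        define c where "c = a + d0"
        have c: "a < c" "c < b" using False d0 by (auto simp: c_def)
        have cont1: "continuous_on {a..c} \<psi>" using cont by (rule continuous_on_subset) (use c in auto)
        have cont2: "continuous_on {c..b} \<psi>" using cont by (rule continuous_on_subset) (use c in auto)
        have bd1: "\<forall>r\<in>{a..c}. norm (\<psi> r) \<le> B" using bd c by auto
        have bd2: "\<forall>r\<in>{c..b}. norm (\<psi> r) \<le> B" using bd c by auto
        have "inv j (K a b \<psi>) = T (b - c) (inv j (K a c \<psi>)) + inv j (K c b \<psi>)"
          by (rule Ysplit[OF a c cont])
        then have "norm (inv j (K a b \<psi>)) \<le> norm (T (b - c) (inv j (K a c \<psi>))) + norm (inv j (K c b \<psi>))"
          by (simp add: norm_triangle_ineq)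
        moreover have "norm (T (b - c) (inv j (K a c \<psi>))) \<le> M * norm (inv j (K a c \<psi>))"
          using M c a bt by auto
        moreover have "norm (inv j (K a c \<psi>)) \<le> B"
          by (rule base[OF a c(1) _ cont1 bd1]) (simp add: c_def)
        moreover have "norm (inv j (K c b \<psi>)) \<le> real n * (M + 1) * B"
        proof -
          have "b - c \<le> real n * d0" using len by (simp add: c_def algebra_simps)
          then show ?thesis using Suc.IH a c bt cont2 bd2 by auto
        qed
        ultimately have "norm (inv j (K a b \<psi>)) \<le> M * B + real n * (M + 1) * B"
          using M1 by (smt (verit) mult_left_mono)
        also have "\<dots> \<le> real (Suc n) * (M + 1) * B" using Bn by (simp add: algebra_simps)
        finally show ?thesis .
      qed
    qed
  qed
  obtain N :: nat where N: "t1 / d0 < real N" using reals_Archimedean2 by blast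
  have tN: "t1 \<le> real N * d0" using N d0 by (simp add: field_simps)
  show ?thesis
  proof (intro exI[of _ "real N * (M + 1)"] conjI allI impI)
    show "0 \<le> real N * (M + 1)" using M1 by simp
    fix a b B and \<psi> :: "real \<Rightarrow> 'x"
    assume "0 \<le> a" "a < b" "b \<le> t1" "continuous_on {a..b} \<psi>" "\<forall>r\<in>{a..b}. norm (\<psi> r) \<le> B"
    moreover have "b - a \<le> real N * d0" using tN calculation by linarith
    ultimately show "norm (inv j (K a b \<psi>)) \<le> real N * (M + 1) * B" using ind[of N] by blast
  qed
qed

end


context p3 begin

lemma key:
  assumes s0: "0 \<le> s0" and cont: "continuous_on {s0..s1} \<phi>"
    and M1: "M \<ge> 1" and M: "\<forall>t\<in>{0..s1}. \<forall>y. norm (T t y) \<le> M * norm y"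
    and C0: "C \<ge> 0"
    and C: "\<forall>a b \<psi> B. 0 \<le> a \<longrightarrow> a < b \<longrightarrow> b \<le> s1 \<longrightarrow> continuous_on {a..b} \<psi> \<longrightarrow>
            (\<forall>r\<in>{a..b}. norm (\<psi> r) \<le> B) \<longrightarrow> norm (inv j (K a b \<psi>)) \<le> C * B"
    and Phi: "\<forall>r\<in>{s0..s1}. norm (\<phi> r) \<le> Phi"
    and tt: "s0 \<le> t" "t < t'" "t' \<le> s1"
    and Bp: "\<forall>r\<in>{s0..t}. norm (\<phi> (r + (t' - t)) - \<phi> r) \<le> Bp" "Bp \<ge> 0"
  shows "norm (inv j (K s0 t' \<phi>) - inv j (K s0 t \<phi>)) \<le> M * (\<eta> (t' - t) * Phi) + C * Bp"
proof -
  define h where "h = t' - t"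
  have h: "h > 0" using tt by (simp add: h_def)
  interpret J: bounded_linear j by (rule jbl)
  have contp: "continuous_on {s0..s0+h} \<phi>" using cont by (rule continuous_on_subset) (use tt in \<open>auto simp: h_def\<close>)
  have u1b: "norm (inv j (K s0 (s0+h) \<phi>)) \<le> \<eta> h * Phi"
    using Hb[OF s0 _ contp, of Phi] h Phi tt by (auto simp: h_def)
  have etah: "\<eta> h \<ge> 0" using etapos h by (auto intro: less_imp_le)
  have "norm (\<phi> s0) \<le> Phi" using Phi tt by auto
  then have Phi0: "Phi \<ge> 0" using norm_ge_zero order_trans by blast
  have nn: "0 \<le> \<eta> h * Phi" using etah Phi0 by simp
  show ?thesis
  proof (cases "t = s0")
    case True
    have "K s0 t \<phi> = 0" using True by simp
    then have "inv j (K s0 t \<phi>) = 0" by (intro invj) (simp add: J.zero)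
    moreover have "t' = s0 + h" using True by (simp add: h_def)
    ultimately have "norm (inv j (K s0 t' \<phi>) - inv j (K s0 t \<phi>)) \<le> \<eta> h * Phi" using u1b by simp
    also have "\<dots> \<le> M * (\<eta> h * Phi)" using M1 nn by (metis mult_le_cancel_right1 mult.commute order_le_less not_le)
    also have "\<dots> \<le> M * (\<eta> h * Phi) + C * Bp" using C0 Bp by simp
    finally show ?thesis by (simp add: h_def)
  next
    case False
    then have ts: "s0 < t" using tt by simp
    define \<psi> where "\<psi> r = \<phi> (r + h) - \<phi> r" for r
    have contsh: "continuous_on {s0..t} (\<lambda>r. \<phi> (r + h))"
      by (rule continuous_on_compose2[OF cont]) (use tt h in \<open>auto intro!: continuous_intros simp: h_def\<close>)
    have contt: "continuous_on {s0..t} \<phi>" using cont by (rule continuous_on_subset) (use tt in auto)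
    have contt': "continuous_on {s0..t'} \<phi>" using cont by (rule continuous_on_subset) (use tt in auto)
    have contpsi: "continuous_on {s0..t} \<psi>" unfolding \<psi>_def by (intro continuous_on_diff contsh contt)
    have e1: "K s0 t' \<phi> = S (t - s0) (K s0 (s0+h) \<phi>) + K (s0+h) t' \<phi>"
      using ksplit[OF s0 _ _ contt', of "s0 + h"] h tt by (simp add: h_def)
    have e2: "K (s0+h) t' \<phi> = K s0 t (\<lambda>r. \<phi> (r + h))"
    proof -
      have "integral {s0..t} ((\<lambda>s. S (t' - s) (\<phi> s)) \<circ> (+) h) = integral {s0+h..t+h} (\<lambda>s. S (t' - s) (\<phi> s))"
        by (rule integral_shift_Icc_real)
      moreover have "t + h = t'" by (simp add: h_def)
      moreover have "integral {s0..t} ((\<lambda>s. S (t' - s) (\<phi> s)) \<circ> (+) h) = K s0 t (\<lambda>r. \<phi> (r + h))"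
        by (rule integral_cong) (simp add: h_def algebra_simps)
      ultimately show ?thesis by simp
    qed
    have e3: "K s0 t (\<lambda>r. \<phi> (r + h)) - K s0 t \<phi> = K s0 t \<psi>"
    proof -
      have "K s0 t (\<lambda>r. \<phi> (r + h)) - K s0 t \<phi> = integral {s0..t} (\<lambda>r. S (t - r) (\<phi> (r + h)) - S (t - r) (\<phi> r))"
        by (rule integral_diff[OF kint[OF contsh] kint[OF contt], symmetric])
      also have "\<dots> = K s0 t \<psi>"
        by (rule integral_cong) (use sg_diff[OF sg] in \<open>auto simp: \<psi>_def\<close>)
      finally show ?thesis .
    qed
    have r1: "K s0 t' \<phi> \<in> range j" by (rule Hs(1)[OF s0 _ contt']) (use tt in auto)
    have r2: "K s0 t \<phi> \<in> range j" by (rule Hs(1)[OF s0 ts contt])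
    have r3: "K s0 (s0+h) \<phi> \<in> range j" by (rule Hs(1)[OF s0 _ contp]) (use h in auto)
    have r4: "K s0 t \<psi> \<in> range j" by (rule Hs(1)[OF s0 ts contpsi])
    have eq: "inv j (K s0 t' \<phi>) - inv j (K s0 t \<phi>) = T (t - s0) (inv j (K s0 (s0+h) \<phi>)) + inv j (K s0 t \<psi>)"
    proof (rule injD[OF jinj])
      have "j (T (t - s0) (inv j (K s0 (s0+h) \<phi>)) + inv j (K s0 t \<psi>)) = S (t - s0) (K s0 (s0+h) \<phi>) + K s0 t \<psi>"
        unfolding J.add jT[of "t - s0", OF less_imp_le[OF diff_gt_0_iff_gt[THEN iffD2, OF ts]]]
        by (simp only: jinv[OF r3] jinv[OF r4])
      also have "\<dots> = K s0 t' \<phi> - K s0 t \<phi>" using e1 e2 e3 by (simp add: algebra_simps)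
      also have "\<dots> = j (inv j (K s0 t' \<phi>) - inv j (K s0 t \<phi>))"
        by (simp only: J.diff jinv[OF r1] jinv[OF r2])
      finally show "j (inv j (K s0 t' \<phi>) - inv j (K s0 t \<phi>)) = j (T (t - s0) (inv j (K s0 (s0+h) \<phi>)) + inv j (K s0 t \<psi>))"
        by simp
    qed
    have "norm (inv j (K s0 t' \<phi>) - inv j (K s0 t \<phi>)) \<le> norm (T (t - s0) (inv j (K s0 (s0+h) \<phi>))) + norm (inv j (K s0 t \<psi>))"
      unfolding eq by (rule norm_triangle_ineq)
    moreover have "norm (T (t - s0) (inv j (K s0 (s0+h) \<phi>))) \<le> M * norm (inv j (K s0 (s0+h) \<phi>))"
      using M tt ts s0 by auto
    moreover have "M * norm (inv j (K s0 (s0+h) \<phi>)) \<le> M * (\<eta> h * Phi)"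
      using u1b M1 by (intro mult_left_mono) auto
    moreover have "norm (inv j (K s0 t \<psi>)) \<le> C * Bp"
      using C s0 ts tt contpsi Bp(1) unfolding \<psi>_def h_def by auto
    ultimately show ?thesis by (simp add: h_def)
  qed
qed

end


context p3 begin

lemma cont_main:
  assumes s0: "0 \<le> s0" "s0 < s1" and cont: "continuous_on {s0..s1} \<phi>"
  shows "continuous_on {s0..s1} (\<lambda>t. inv j (K s0 t \<phi>))"
proof -
  have s1: "s1 > 0" using s0 by simp
  obtain M where M1: "M \<ge> 1" and M: "\<forall>t\<in>{0..s1}. \<forall>y. norm (T t y) \<le> M * norm y"
    using Mbound[OF s1] by blast
  obtain C where C0: "C \<ge> 0" and C: "\<forall>a b \<psi> B. 0 \<le> a \<longrightarrow> a < b \<longrightarrow> b \<le> s1 \<longrightarrow> continuous_on {a..b} \<psi> \<longrightarrow>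
            (\<forall>r\<in>{a..b}. norm (\<psi> r) \<le> B) \<longrightarrow> norm (inv j (K a b \<psi>)) \<le> C * B"
    using Cbound[OF s1] by blast
  have "compact (\<phi> ` {s0..s1})" by (intro compact_continuous_image cont) simp
  then have "bounded (\<phi> ` {s0..s1})" by (rule compact_imp_bounded)
  then obtain Phi where "\<forall>x\<in>\<phi> ` {s0..s1}. norm x \<le> Phi" unfolding bounded_iff by (elim exE)
  then have Phi: "\<forall>r\<in>{s0..s1}. norm (\<phi> r) \<le> Phi" by simp
  have "norm (\<phi> s0) \<le> Phi" using Phi s0 by auto
  then have Phi0: "Phi \<ge> 0" using norm_ge_zero order_trans by blast
  have uc: "uniformly_continuous_on {s0..s1} \<phi>" by (rule compact_uniformly_continuous[OF cont]) simp
  show ?thesis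
    unfolding continuous_on_iff
  proof (intro ballI allI impI)
    fix t0 e :: real assume t0: "t0 \<in> {s0..s1}" and e: "e > 0"
    define A where "A = M * Phi"
    have A0: "A \<ge> 0" using M1 Phi0 by (simp add: A_def)
    obtain b1 where b1: "b1 > 0" "\<forall>h. 0 < h \<and> h < b1 \<longrightarrow> \<eta> h < e / (2 * (A + 1))"
      using eta_small[of "e / (2 * (A + 1))"] e A0 by auto
    define Bp where "Bp = e / (2 * (C + 1))"
    have Bp0: "Bp > 0" using e C0 by (simp add: Bp_def)
    obtain d2 where d2: "d2 > 0" "\<forall>x\<in>{s0..s1}. \<forall>x'\<in>{s0..s1}. dist x' x < d2 \<longrightarrow> dist (\<phi> x') (\<phi> x) < Bp"
      using uc Bp0 unfolding uniformly_continuous_on_def by metis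
    have est: "norm (inv j (K s0 t' \<phi>) - inv j (K s0 t \<phi>)) < e"
      if tt: "s0 \<le> t" "t < t'" "t' \<le> s1" "t' - t < min b1 d2" for t t'
    proof -
      have bp: "\<forall>r\<in>{s0..t}. norm (\<phi> (r + (t' - t)) - \<phi> r) \<le> Bp"
      proof
        fix r assume r: "r \<in> {s0..t}"
        have "dist (\<phi> (r + (t' - t))) (\<phi> r) < Bp"
          using d2(2) r tt by (auto simp: dist_real_def)
        then show "norm (\<phi> (r + (t' - t)) - \<phi> r) \<le> Bp" by (simp add: dist_norm)
      qed
      have "norm (inv j (K s0 t' \<phi>) - inv j (K s0 t \<phi>)) \<le> M * (\<eta> (t' - t) * Phi) + C * Bp"
        by (rule key[OF s0(1) cont M1 M C0 C Phi tt(1-3) bp less_imp_le[OF Bp0]])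
      also have "M * (\<eta> (t' - t) * Phi) = A * \<eta> (t' - t)" by (simp add: A_def)
      also have "A * \<eta> (t' - t) \<le> A * (e / (2 * (A + 1)))"
      proof (rule mult_left_mono)
        have "\<eta> (t' - t) < e / (2 * (A + 1))" using b1(2) tt by auto
        then show "\<eta> (t' - t) \<le> e / (2 * (A + 1))" by simp
      qed (rule A0)
      also have "C * Bp < e / 2" unfolding Bp_def by (rule aux_frac[OF C0 e])
      also have "A * (e / (2 * (A + 1))) < e / 2" by (rule aux_frac[OF A0 e])
      finally show ?thesis by simp
    qed
    show "\<exists>d>0. \<forall>t\<in>{s0..s1}. dist t t0 < d \<longrightarrow> dist (inv j (K s0 t \<phi>)) (inv j (K s0 t0 \<phi>)) < e"
    proof (intro exI[of _ "min b1 d2"] conjI ballI impI)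
      show "min b1 d2 > 0" using b1 d2 by simp
      fix t assume t: "t \<in> {s0..s1}" and dt: "dist t t0 < min b1 d2"
      consider "t < t0" | "t = t0" | "t0 < t" by linarith
      then show "dist (inv j (K s0 t \<phi>)) (inv j (K s0 t0 \<phi>)) < e"
      proof cases
        case 1
        then have "norm (inv j (K s0 t0 \<phi>) - inv j (K s0 t \<phi>)) < e"
          using est[of t t0] t t0 dt by (auto simp: dist_real_def)
        then show ?thesis by (simp add: dist_norm norm_minus_commute)
      next
        case 2 then show ?thesis using e by simp
      next
        case 3
        then have "norm (inv j (K s0 t \<phi>) - inv j (K s0 t0 \<phi>)) < e"
          using est[of t0 t] t t0 dt by (auto simp: dist_real_def)
        then show ?thesis by (simp add: dist_norm)
      qed
    qed
  qed
qed

end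

theorem lemma3p6:
  fixes j :: "'y::banach \<Rightarrow> 'x::banach"
    and S :: "real \<Rightarrow> 'x \<Rightarrow> 'x"
    and D :: "'x set" and G :: "'x \<Rightarrow> 'x"
  assumes emb_lin: "bounded_linear j" and emb_inj: "inj j"
    and gen: "generates_C0 D G S"
    and inv_Y: "\<And>t. t \<ge> 0 \<Longrightarrow> S t ` range j \<subseteq> range j"
  shows
    "(\<forall>t\<ge>0. bounded_linear (\<lambda>y. inv j (S t (j y))))
     \<and>
     ((\<forall>y. continuous_on {0..} (\<lambda>t. inv j (S t (j y)))) \<longrightarrow>
        (\<forall>t1>0. bounded ((\<lambda>t. onorm (\<lambda>y. inv j (S t (j y)))) ` {0..t1})))
     \<and>
     (((\<forall>t1>0. bounded ((\<lambda>t. onorm (\<lambda>y. inv j (S t (j y)))) ` {0..t1})) \<and>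
       (\<exists>\<eta>::real \<Rightarrow> real. (\<forall>\<delta>>0. \<eta> \<delta> > 0) \<and> (\<eta> \<longlongrightarrow> 0) (at_right 0) \<and>
          (\<forall>s0 s1 (\<phi>::real \<Rightarrow> 'x). 0 \<le> s0 \<and> s0 < s1 \<and> continuous_on {s0..s1} \<phi> \<longrightarrow>
              integral {s0..s1} (\<lambda>s. S (s1 - s) (\<phi> s)) \<in> range j \<and>
              norm (inv j (integral {s0..s1} (\<lambda>s. S (s1 - s) (\<phi> s))))
                \<le> \<eta> (s1 - s0) * Sup ((\<lambda>s. norm (\<phi> s)) ` {s0..s1}))))
      \<longrightarrow>
      (\<forall>s0 s1 (\<phi>::real \<Rightarrow> 'x). 0 \<le> s0 \<and> s0 < s1 \<and> continuous_on {s0..s1} \<phi> \<longrightarrow>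
          (\<forall>t\<in>{s0..s1}. integral {s0..t} (\<lambda>s. S (t - s) (\<phi> s)) \<in> range j) \<and>
          continuous_on {s0..s1} (\<lambda>t. inv j (integral {s0..t} (\<lambda>s. S (t - s) (\<phi> s))))))"
proof -
  have sg: "C0_semigroup S" using gen unfolding generates_C0_def by blast
  have P1: "\<forall>t\<ge>0. bounded_linear (\<lambda>y. inv j (S t (j y)))"
    using restr(1)[OF emb_lin emb_inj sg_bl[OF sg] inv_Y] by blast
  have P2: "(\<forall>y. continuous_on {0..} (\<lambda>t. inv j (S t (j y)))) \<longrightarrow>
        (\<forall>t1>0. bounded ((\<lambda>t. onorm (\<lambda>y. inv j (S t (j y)))) ` {0..t1}))"
    using part2[of "\<lambda>t y. inv j (S t (j y))", OF P1] by blast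
  have P3: "((\<forall>t1>0. bounded ((\<lambda>t. onorm (\<lambda>y. inv j (S t (j y)))) ` {0..t1})) \<and>
       (\<exists>\<eta>::real \<Rightarrow> real. (\<forall>\<delta>>0. \<eta> \<delta> > 0) \<and> (\<eta> \<longlongrightarrow> 0) (at_right 0) \<and>
          (\<forall>s0 s1 (\<phi>::real \<Rightarrow> 'x). 0 \<le> s0 \<and> s0 < s1 \<and> continuous_on {s0..s1} \<phi> \<longrightarrow>
              integral {s0..s1} (\<lambda>s. S (s1 - s) (\<phi> s)) \<in> range j \<and>
              norm (inv j (integral {s0..s1} (\<lambda>s. S (s1 - s) (\<phi> s))))
                \<le> \<eta> (s1 - s0) * Sup ((\<lambda>s. norm (\<phi> s)) ` {s0..s1}))))
      \<longrightarrow>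
      (\<forall>s0 s1 (\<phi>::real \<Rightarrow> 'x). 0 \<le> s0 \<and> s0 < s1 \<and> continuous_on {s0..s1} \<phi> \<longrightarrow>
          (\<forall>t\<in>{s0..s1}. integral {s0..t} (\<lambda>s. S (t - s) (\<phi> s)) \<in> range j) \<and>
          continuous_on {s0..s1} (\<lambda>t. inv j (integral {s0..t} (\<lambda>s. S (t - s) (\<phi> s)))))"
  proof (intro impI allI)
    fix s0 s1 and \<phi> :: "real \<Rightarrow> 'x"
    assume hyp: "(\<forall>t1>0. bounded ((\<lambda>t. onorm (\<lambda>y. inv j (S t (j y)))) ` {0..t1})) \<and>
       (\<exists>\<eta>::real \<Rightarrow> real. (\<forall>\<delta>>0. \<eta> \<delta> > 0) \<and> (\<eta> \<longlongrightarrow> 0) (at_right 0) \<and>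
          (\<forall>s0 s1 (\<phi>::real \<Rightarrow> 'x). 0 \<le> s0 \<and> s0 < s1 \<and> continuous_on {s0..s1} \<phi> \<longrightarrow>
              integral {s0..s1} (\<lambda>s. S (s1 - s) (\<phi> s)) \<in> range j \<and>
              norm (inv j (integral {s0..s1} (\<lambda>s. S (s1 - s) (\<phi> s))))
                \<le> \<eta> (s1 - s0) * Sup ((\<lambda>s. norm (\<phi> s)) ` {s0..s1})))"
      and ss: "0 \<le> s0 \<and> s0 < s1 \<and> continuous_on {s0..s1} \<phi>"
    from hyp obtain \<eta> :: "real \<Rightarrow> real" where
      bnd: "\<forall>t1>0. bounded ((\<lambda>t. onorm (\<lambda>y. inv j (S t (j y)))) ` {0..t1})"
      and e1: "\<forall>\<delta>>0. \<eta> \<delta> > 0" and e2: "(\<eta> \<longlongrightarrow> 0) (at_right 0)"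
      and e3: "\<forall>s0 s1 (\<phi>::real \<Rightarrow> 'x). 0 \<le> s0 \<and> s0 < s1 \<and> continuous_on {s0..s1} \<phi> \<longrightarrow>
              integral {s0..s1} (\<lambda>s. S (s1 - s) (\<phi> s)) \<in> range j \<and>
              norm (inv j (integral {s0..s1} (\<lambda>s. S (s1 - s) (\<phi> s))))
                \<le> \<eta> (s1 - s0) * Sup ((\<lambda>s. norm (\<phi> s)) ` {s0..s1})"
      by blast
    interpret P: p3 j S \<eta>
      by (rule p3.intro[OF emb_lin emb_inj sg inv_Y bnd e1 e2 e3])
    have s0: "0 \<le> s0" "s0 < s1" and cont: "continuous_on {s0..s1} \<phi>" using ss by auto
    have rng: "integral {s0..t} (\<lambda>s. S (t - s) (\<phi> s)) \<in> range j" if t: "t \<in> {s0..s1}" for t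
    proof (cases "t = s0")
      case True
      have "j 0 = 0" by (rule linear_simps(3)[OF emb_lin])
      then show ?thesis using True by (metis rangeI integral_singleton atLeastAtMost_singleton)
    next
      case False
      then have "s0 < t" using t by auto
      moreover have "continuous_on {s0..t} \<phi>" using cont by (rule continuous_on_subset) (use t in auto)
      ultimately show ?thesis using P.Hs(1)[OF s0(1)] by blast
    qed
    show "(\<forall>t\<in>{s0..s1}. integral {s0..t} (\<lambda>s. S (t - s) (\<phi> s)) \<in> range j) \<and>
          continuous_on {s0..s1} (\<lambda>t. inv j (integral {s0..t} (\<lambda>s. S (t - s) (\<phi> s))))"
      using rng P.cont_main[OF s0 cont] by blast
  qed
  show ?thesis using P1 P2 P3 by blast
qed

end
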